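(* Let $\rho\in(0,1)$ and $1\le r\le d$. Then every $Z\in T_{\rho,r}$ satisfies $$\frac{\|Z\|_1^2}{\|Z\|_2^2}\le\left(\frac{\rho+1}{\rho}\right)^2 r.$$
   Context: $H_d$ is the real vector space of Hermitian $d\times d$ matrices; $\|\cdot\|_1$ is the nuclear norm and $\|\cdot\|_2$ the Frobenius norm. For $Z\in H_d$ let $Z_r$ be a best rank-$r$ approximation of $Z$ in nuclear norm (keep the $r$ eigenvalues of largest modulus in the spectral decomposition), and $Z_c=Z-Z_r$, so $\|Z_c\|_1=\sigma_r(Z)=\inf\{\|Z-Y\|_1:\mathrm{rank}(Y)=r\}$. Define $T_{\rho,r}=\{Z\in H_d:\ \|Z_r\|_2>\frac{\rho}{\sqrt r}\|Z_c\|_1,\ \|Z\|_2=1\}$. *)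

theory Defs
  imports "HOL-Analysis.Analysis"
begin

text \<open>Hermitian d x d matrices are modelled as complex matrices of type complex^'n^'n,
  where d = CARD('n).\<close>

definition adjoint_mat :: "complex^'n^'n \<Rightarrow> complex^'n^'n" where
  "adjoint_mat A = (\<chi> i j. cnj (A $ j $ i))"

definition hermitian_mat :: "complex^'n^'n \<Rightarrow> bool" where
  "hermitian_mat A \<longleftrightarrow> adjoint_mat A = A"

definition unitary_mat :: "complex^'n^'n \<Rightarrow> bool" where
  "unitary_mat U \<longleftrightarrow> U ** adjoint_mat U = mat 1 \<and> adjoint_mat U ** U = mat 1"

definition diag_mat :: "real^'n \<Rightarrow> complex^'n^'n" where
  "diag_mat l = (\<chi> i j. if i = j then complex_of_real (l $ i) else 0)"

definition spectral_decomp :: "complex^'n^'n \<Rightarrow> complex^'n^'n \<Rightarrow> real^'n \<Rightarrow> bool" where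
  "spectral_decomp Z U l \<longleftrightarrow> unitary_mat U \<and> Z = U ** diag_mat l ** adjoint_mat U"

definition frob_norm :: "complex^'n^'n \<Rightarrow> real" where
  "frob_norm Z = sqrt (\<Sum>i\<in>UNIV. \<Sum>j\<in>UNIV. (cmod (Z $ i $ j))\<^sup>2)"

text \<open>Nuclear norm of a Hermitian matrix: the sum of the absolute values of its eigenvalues
  (= sum of singular values).\<close>
definition nuc_norm :: "complex^'n^'n \<Rightarrow> real" where
  "nuc_norm Z = (THE s. \<exists>U l. spectral_decomp Z U l \<and> s = (\<Sum>i\<in>UNIV. \<bar>l $ i\<bar>))"

text \<open>Zr is a best rank-r approximation of Z obtained by keeping the r eigenvalues of
  largest modulus in a spectral decomposition of Z.\<close>
definition eig_truncation :: "nat \<Rightarrow> complex^'n^'n \<Rightarrow> complex^'n^'n \<Rightarrow> bool" where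
  "eig_truncation r Z Zr \<longleftrightarrow>
     (\<exists>U l S. spectral_decomp Z U l \<and> card S = r \<and>
        (\<forall>i\<in>S. \<forall>j. j \<notin> S \<longrightarrow> \<bar>l $ j\<bar> \<le> \<bar>l $ i\<bar>) \<and>
        Zr = U ** diag_mat (\<chi> i. if i \<in> S then l $ i else 0) ** adjoint_mat U)"

definition T_set :: "real \<Rightarrow> nat \<Rightarrow> (complex^'n^'n) set" where
  "T_set \<rho> r = {Z. hermitian_mat Z \<and> frob_norm Z = 1 \<and>
     (\<exists>Zr. eig_truncation r Z Zr \<and> frob_norm Zr > \<rho> / sqrt (real r) * nuc_norm (Z - Zr))}"

end

theory Submission imports Defs begin

definition dg :: "(real \<Rightarrow> real) \<Rightarrow> real^'n \<Rightarrow> complex^'n^'n" where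
  "dg f l = diag_mat (\<chi> i. f (l$i))"

definition good :: "complex^'n^'n \<Rightarrow> (real \<Rightarrow> real) \<Rightarrow> bool" where
  "good Z f \<longleftrightarrow> (\<forall>U l V m. spectral_decomp Z U l \<longrightarrow> spectral_decomp Z V m \<longrightarrow>
     U ** dg f l ** adjoint_mat U = V ** dg f m ** adjoint_mat V)"

lemma diag_mult: fixes a b :: "real^'n" shows "diag_mat a ** diag_mat b = diag_mat (\<chi> i. a$i * b$i)"
proof -
  have "(\<Sum>k\<in>UNIV. (if i = k then complex_of_real (a$i) else 0) * (if k = j then complex_of_real (b$k) else 0))
     = (if i = j then complex_of_real (a$i * b$i) else 0)" for i j :: 'n
  proof -
    have "(\<Sum>k\<in>UNIV. (if i = k then complex_of_real (a$i) else 0) * (if k = j then complex_of_real (b$k) else 0))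
      = (\<Sum>k\<in>UNIV. if k = i then (if i = j then complex_of_real (a$i * b$i) else 0) else 0)"
      by (rule sum.cong) auto
    also have "\<dots> = (if i = j then complex_of_real (a$i * b$i) else 0)" by simp
    finally show ?thesis .
  qed
  then show ?thesis by (simp add: vec_eq_iff matrix_matrix_mult_def diag_mat_def)
qed

lemma diag_add: "diag_mat (\<chi> i. a$i + b$i) = diag_mat a + diag_mat b"
  by (simp add: vec_eq_iff diag_mat_def)

lemma matrix_add_rdistrib: "((A + B) ** C) = (A ** C) + (B ** C)"
  by (vector matrix_matrix_mult_def sum.distrib[symmetric] field_simps)

lemma mat_comm: fixes A :: "'a::comm_semiring_1^'n^'n" shows "mat k ** A = A ** mat k"
proof -
  have l: "(\<Sum>x\<in>UNIV. (if i = x then k else 0) * A $ x $ j) = k * A $ i $ j" for i j :: 'n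
  proof -
    have "(\<Sum>x\<in>UNIV. (if i = x then k else 0) * A $ x $ j) = (\<Sum>x\<in>UNIV. if x = i then k * A $ i $ j else 0)"
      by (rule sum.cong) auto
    then show ?thesis by simp
  qed
  have r: "(\<Sum>x\<in>UNIV. A $ i $ x * (if x = j then k else 0)) = k * A $ i $ j" for i j :: 'n
  proof -
    have "(\<Sum>x\<in>UNIV. A $ i $ x * (if x = j then k else 0)) = (\<Sum>x\<in>UNIV. if x = j then k * A $ i $ j else 0)"
      by (rule sum.cong) (auto simp: mult.commute)
    then show ?thesis by simp
  qed
  show ?thesis by (simp add: vec_eq_iff matrix_matrix_mult_def mat_def l r)
qed

lemma conj_const: assumes "unitary_mat U" shows "U ** mat k ** adjoint_mat U = mat k"
proof -
  have h: "U ** adjoint_mat U = mat 1" using assms by (simp add: unitary_mat_def)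
  have "U ** mat k ** adjoint_mat U = mat k ** U ** adjoint_mat U" by (simp only: mat_comm)
  also have "\<dots> = mat k ** (U ** adjoint_mat U)" by (simp only: matrix_mul_assoc)
  also have "\<dots> = mat k" by (simp only: h matrix_mul_rid)
  finally show ?thesis .
qed

lemma conj_mult: assumes "unitary_mat U"
  shows "U ** (A ** B) ** adjoint_mat U = (U ** A ** adjoint_mat U) ** (U ** B ** adjoint_mat U)"
proof -
  have h: "adjoint_mat U ** U = mat 1" using assms by (simp add: unitary_mat_def)
  have "(U ** A ** adjoint_mat U) ** (U ** B ** adjoint_mat U) = (U ** A) ** ((adjoint_mat U ** U) ** (B ** adjoint_mat U))"
    by (simp only: matrix_mul_assoc)
  also have "\<dots> = (U ** A) ** (B ** adjoint_mat U)" by (simp only: h matrix_mul_lid)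
  also have "\<dots> = U ** (A ** B) ** adjoint_mat U" by (simp only: matrix_mul_assoc)
  finally show ?thesis by (rule sym)
qed

lemma good_const: "good Z (\<lambda>x. c)"
proof -
  have "dg (\<lambda>x. c) l = mat (complex_of_real c)" for l :: "real^'n"
    by (simp add: dg_def diag_mat_def mat_def vec_eq_iff)
  note * = this
  show ?thesis unfolding good_def spectral_decomp_def by (auto simp: * conj_const)
qed

lemma good_id: "good Z (\<lambda>x. x)"
  by (simp add: good_def spectral_decomp_def dg_def)

lemma good_add: "good Z f \<Longrightarrow> good Z g \<Longrightarrow> good Z (\<lambda>x. f x + g x)"
proof -
  assume a: "good Z f" "good Z g"
  have *: "dg (\<lambda>x. f x + g x) l = dg f l + dg g l" for l :: "real^'n"
    by (simp add: dg_def diag_add[symmetric])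
  show ?thesis unfolding good_def
  proof (intro allI impI)
    fix U l V m assume sU: "spectral_decomp Z U l" and sV: "spectral_decomp Z V m"
    have ef: "U ** dg f l ** adjoint_mat U = V ** dg f m ** adjoint_mat V"
      using a(1) sU sV unfolding good_def by blast
    have eg: "U ** dg g l ** adjoint_mat U = V ** dg g m ** adjoint_mat V"
      using a(2) sU sV unfolding good_def by blast
    show "U ** dg (\<lambda>x. f x + g x) l ** adjoint_mat U = V ** dg (\<lambda>x. f x + g x) m ** adjoint_mat V"
      by (simp only: * matrix_add_ldistrib matrix_add_rdistrib ef eg)
  qed
qed

lemma good_mult: "good Z f \<Longrightarrow> good Z g \<Longrightarrow> good Z (\<lambda>x. f x * g x)"
proof -
  assume a: "good Z f" "good Z g"
  have *: "dg (\<lambda>x. f x * g x) l = dg f l ** dg g l" for l :: "real^'n"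
    by (simp add: dg_def diag_mult)
  show ?thesis unfolding good_def
  proof (intro allI impI)
    fix U l V m assume sU: "spectral_decomp Z U l" and sV: "spectral_decomp Z V m"
    have uU: "unitary_mat U" and uV: "unitary_mat V" using sU sV by (auto simp: spectral_decomp_def)
    have ef: "U ** dg f l ** adjoint_mat U = V ** dg f m ** adjoint_mat V"
      using a(1) sU sV unfolding good_def by blast
    have eg: "U ** dg g l ** adjoint_mat U = V ** dg g m ** adjoint_mat V"
      using a(2) sU sV unfolding good_def by blast
    show "U ** dg (\<lambda>x. f x * g x) l ** adjoint_mat U = V ** dg (\<lambda>x. f x * g x) m ** adjoint_mat V"
      by (simp only: * conj_mult[OF uU] conj_mult[OF uV] ef eg)
  qed
qed

lemma good_sum: "finite A \<Longrightarrow> (\<And>s. s \<in> A \<Longrightarrow> good Z (h s)) \<Longrightarrow> good Z (\<lambda>x. \<Sum>s\<in>A. h s x)"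
  by (induction A rule: finite_induct) (auto intro: good_add good_const)

lemma good_prod: "finite A \<Longrightarrow> (\<And>s. s \<in> A \<Longrightarrow> good Z (h s)) \<Longrightarrow> good Z (\<lambda>x. \<Prod>s\<in>A. h s x)"
  by (induction A rule: finite_induct) (auto intro: good_mult good_const)

lemma good_lin: "good Z (\<lambda>x. (x - t) / (s - t))"
proof -
  have "good Z (\<lambda>x. (x + (- t)) * (1 / (s - t)))"
    by (intro good_mult good_add good_id good_const)
  then show ?thesis by (simp add: field_simps)
qed

lemma interp: assumes "finite K" shows "\<exists>f. good Z f \<and> (\<forall>x\<in>K. f x = \<bar>x\<bar>)"
proof -
  define f where "f x = (\<Sum>s\<in>K. \<bar>s\<bar> * (\<Prod>t\<in>K-{s}. (x - t) / (s - t)))" for x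
  have "good Z f" unfolding f_def[abs_def]
    by (intro good_sum good_mult good_const good_prod assms finite_Diff good_lin)
  moreover have "f x = \<bar>x\<bar>" if "x \<in> K" for x
  proof -
    have "(\<Prod>t\<in>K-{s}. (x - t) / (s - t)) = (if s = x then 1 else 0)" if "s \<in> K" for s
      using \<open>x \<in> K\<close> assms by (auto intro: prod.neutral)
    note ** = this
    have "f x = \<bar>x\<bar> * (\<Prod>t\<in>K-{x}. (x - t) / (x - t)) + (\<Sum>s\<in>K-{x}. \<bar>s\<bar> * (\<Prod>t\<in>K-{s}. (x - t) / (s - t)))"
      unfolding f_def using that assms by (simp add: sum.remove)
    also have "\<dots> = \<bar>x\<bar>" using ** that by (simp add: **)
    finally show ?thesis .
  qed
  ultimately show ?thesis by blast
qed

lemma trace_conj: assumes "unitary_mat U"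
  shows "trace (U ** diag_mat l ** adjoint_mat U) = complex_of_real (\<Sum>i\<in>UNIV. l$i)"
proof -
  have "trace (U ** diag_mat l ** adjoint_mat U) = trace (adjoint_mat U ** (U ** diag_mat l))"
    by (rule trace_mul_sym)
  also have "\<dots> = trace (diag_mat l)" using assms
    by (simp add: matrix_mul_assoc unitary_mat_def)
  also have "\<dots> = complex_of_real (\<Sum>i\<in>UNIV. l$i)"
    by (simp add: trace_def diag_mat_def)
  finally show ?thesis .
qed

lemma nuc_unique: assumes "spectral_decomp Z U l" "spectral_decomp Z V m"
  shows "(\<Sum>i\<in>UNIV. \<bar>l$i\<bar>) = (\<Sum>i\<in>UNIV. \<bar>m$i\<bar>)"
proof -
  obtain f where f: "good Z f" "\<forall>x\<in>range (\<lambda>i. l$i) \<union> range (\<lambda>i. m$i). f x = \<bar>x\<bar>"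
    using interp[of "range (\<lambda>i. l$i) \<union> range (\<lambda>i. m$i)" Z] by auto
  have e: "U ** dg f l ** adjoint_mat U = V ** dg f m ** adjoint_mat V"
    using f(1) assms unfolding good_def by blast
  have u: "unitary_mat U" "unitary_mat V" using assms by (auto simp: spectral_decomp_def)
  have "complex_of_real (\<Sum>i\<in>UNIV. f (l$i)) = complex_of_real (\<Sum>i\<in>UNIV. f (m$i))"
    using trace_conj[OF u(1), of "\<chi> i. f (l$i)"] trace_conj[OF u(2), of "\<chi> i. f (m$i)"] e
    by (simp add: dg_def)
  then have "(\<Sum>i\<in>UNIV. f (l$i)) = (\<Sum>i\<in>UNIV. f (m$i))" by (simp only: of_real_eq_iff)
  moreover have "(\<Sum>i\<in>UNIV. f (l$i)) = (\<Sum>i\<in>UNIV. \<bar>l$i\<bar>)" "(\<Sum>i\<in>UNIV. f (m$i)) = (\<Sum>i\<in>UNIV. \<bar>m$i\<bar>)"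
    using f(2) by (auto intro!: sum.cong)
  ultimately show ?thesis by linarith
qed

lemma nuc_eq: assumes "spectral_decomp Z U l" shows "nuc_norm Z = (\<Sum>i\<in>UNIV. \<bar>l$i\<bar>)"
  unfolding nuc_norm_def
proof (rule the_equality)
  show "\<exists>U' l'. spectral_decomp Z U' l' \<and> (\<Sum>i\<in>UNIV. \<bar>l$i\<bar>) = (\<Sum>i\<in>UNIV. \<bar>l'$i\<bar>)"
    using assms by blast
next
  fix s assume "\<exists>U' l'. spectral_decomp Z U' l' \<and> s = (\<Sum>i\<in>UNIV. \<bar>l'$i\<bar>)"
  then show "s = (\<Sum>i\<in>UNIV. \<bar>l$i\<bar>)" using nuc_unique[OF assms] by metis
qed

lemma adj_mult: "adjoint_mat (A ** B) = adjoint_mat B ** adjoint_mat A"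
  by (simp add: vec_eq_iff adjoint_mat_def matrix_matrix_mult_def mult.commute)

lemma adj_adj: "adjoint_mat (adjoint_mat A) = A"
  by (simp add: vec_eq_iff adjoint_mat_def)

lemma adj_diag: "adjoint_mat (diag_mat l) = diag_mat l"
  by (simp add: vec_eq_iff adjoint_mat_def diag_mat_def)

lemma cmod_sq: "(complex_of_real (cmod z))\<^sup>2 = z * cnj z"
  by (metis complex_norm_square of_real_power)

lemma frob_trace: "complex_of_real ((frob_norm Z)\<^sup>2) = trace (Z ** adjoint_mat Z)"
proof -
  have "(frob_norm Z)\<^sup>2 = (\<Sum>i\<in>UNIV. \<Sum>j\<in>UNIV. (cmod (Z $ i $ j))\<^sup>2)"
    unfolding frob_norm_def by (simp add: sum_nonneg)
  then show ?thesis
    by (simp add: trace_def matrix_matrix_mult_def adjoint_mat_def cmod_sq)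
qed

lemma frob_eq: assumes "unitary_mat U"
  shows "frob_norm (U ** diag_mat l ** adjoint_mat U) = sqrt (\<Sum>i\<in>UNIV. (l$i)\<^sup>2)"
proof -
  let ?Z = "U ** diag_mat l ** adjoint_mat U"
  have "adjoint_mat ?Z = ?Z" by (simp add: adj_mult adj_adj adj_diag matrix_mul_assoc)
  then have "?Z ** adjoint_mat ?Z = U ** (diag_mat l ** diag_mat l) ** adjoint_mat U"
    using conj_mult[OF assms] by simp
  also have "\<dots> = U ** diag_mat (\<chi> i. (l$i)\<^sup>2) ** adjoint_mat U"
    by (simp add: diag_mult power2_eq_square)
  finally have "complex_of_real ((frob_norm ?Z)\<^sup>2) = complex_of_real (\<Sum>i\<in>UNIV. (l$i)\<^sup>2)"
    using frob_trace[of ?Z] trace_conj[OF assms, of "\<chi> i. (l$i)\<^sup>2"] by (simp del: of_real_sum of_real_power)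
  then have "(frob_norm ?Z)\<^sup>2 = (\<Sum>i\<in>UNIV. (l$i)\<^sup>2)" by (simp only: of_real_eq_iff)
  moreover have "frob_norm ?Z \<ge> 0" unfolding frob_norm_def by (intro real_sqrt_ge_zero sum_nonneg) auto
  ultimately show ?thesis by (metis real_sqrt_abs abs_of_nonneg)
qed

theorem lemma1:
  fixes \<rho> :: real and r :: nat and Z :: "complex^'n^'n"
  assumes "0 < \<rho>" and "\<rho> < 1"
    and "1 \<le> r" and "r \<le> CARD('n)"
    and "Z \<in> T_set \<rho> r"
  shows "(nuc_norm Z)\<^sup>2 / (frob_norm Z)\<^sup>2 \<le> ((\<rho> + 1) / \<rho>)\<^sup>2 * real r"
proof -
  from assms(5) obtain Zr where herm: "hermitian_mat Z" and fz: "frob_norm Z = 1"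
    and tr: "eig_truncation r Z Zr" and big: "frob_norm Zr > \<rho> / sqrt (real r) * nuc_norm (Z - Zr)"
    by (auto simp: T_set_def)
  from tr obtain U l S where sd: "spectral_decomp Z U l" and cS: "card S = r"
    and Zr: "Zr = U ** diag_mat (\<chi> i. if i \<in> S then l $ i else 0) ** adjoint_mat U"
    unfolding eig_truncation_def by blast
  have u: "unitary_mat U" and Zd: "Z = U ** diag_mat l ** adjoint_mat U"
    using sd by (auto simp: spectral_decomp_def)
  define lS where "lS = (\<chi> i. if i \<in> S then l $ i else 0)"
  define lC where "lC = (\<chi> i. if i \<in> S then 0 else l $ i)"
  have "l = (\<chi> i. lS$i + lC$i)" by (simp add: vec_eq_iff lS_def lC_def)
  then have "diag_mat l = diag_mat lS + diag_mat lC"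
    by (metis diag_add)
  then have "Z = Zr + U ** diag_mat lC ** adjoint_mat U"
    using Zd Zr lS_def by (simp add: matrix_add_ldistrib matrix_add_rdistrib)
  then have Zc: "Z - Zr = U ** diag_mat lC ** adjoint_mat U" by simp
  have sdc: "spectral_decomp (Z - Zr) U lC" using Zc u by (simp add: spectral_decomp_def)
  define a where "a = (\<Sum>i\<in>S. \<bar>l$i\<bar>)"
  define b where "b = (\<Sum>i\<in>-S. \<bar>l$i\<bar>)"
  define q where "q = (\<Sum>i\<in>S. (l$i)\<^sup>2)"
  have nZ: "nuc_norm Z = a + b" unfolding nuc_eq[OF sd] a_def b_def
    using sum.subset_diff[of S UNIV "\<lambda>i. \<bar>l$i\<bar>"] by (simp add: Compl_eq_Diff_UNIV add.commute)
  have nC: "nuc_norm (Z - Zr) = b" unfolding nuc_eq[OF sdc] b_def lC_def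
    by (simp add: if_distrib sum.If_cases Compl_eq_Diff_UNIV)
  have sq: "(\<Sum>i\<in>UNIV. ((\<chi> i. if i \<in> S then l $ i else 0) $ i)\<^sup>2) = q"
  proof -
    have "(\<Sum>i\<in>UNIV. ((\<chi> i. if i \<in> S then l $ i else 0) $ i)\<^sup>2) = (\<Sum>i\<in>UNIV. if i \<in> S then (l$i)\<^sup>2 else 0)"
      by (rule sum.cong) auto
    also have "\<dots> = q" unfolding q_def by (simp add: sum.If_cases)
    finally show ?thesis .
  qed
  have fr: "frob_norm Zr = sqrt q" unfolding Zr frob_eq[OF u] sq ..
  have q1: "q \<le> 1"
  proof -
    have "sqrt (\<Sum>i\<in>UNIV. (l$i)\<^sup>2) = 1" using fz Zd frob_eq[OF u] by simp
    then have "(\<Sum>i\<in>UNIV. (l$i)\<^sup>2) = 1" by simp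
    moreover have "q \<le> (\<Sum>i\<in>UNIV. (l$i)\<^sup>2)" unfolding q_def
      by (rule sum_mono2) auto
    ultimately show ?thesis by simp
  qed
  have q0: "q \<ge> 0" unfolding q_def by (simp add: sum_nonneg)
  have a0: "a \<ge> 0" "b \<ge> 0" unfolding a_def b_def by (auto simp: sum_nonneg)
  have "a\<^sup>2 \<le> q * real r" unfolding a_def q_def cS[symmetric]
    using sum_squared_le_sum_of_squares[of "\<lambda>i. \<bar>l$i\<bar>" S] by simp
  then have "a \<le> sqrt (q * real r)" using a0 by (simp add: real_le_rsqrt)
  then have aa: "a \<le> sqrt r * sqrt q" by (simp add: real_sqrt_mult mult.commute)
  have r0: "sqrt (real r) > 0" using assms(3) by simp
  have bb: "\<rho> * b < sqrt r * sqrt q"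
    using big fr nC r0 by (simp add: field_simps)
  have sq1: "sqrt q \<le> 1" using q1 by simp
  have "\<rho> * a \<le> \<rho> * (sqrt r * sqrt q)" using aa assms(1) by (simp add: mult_left_mono)
  then have "\<rho> * (a + b) \<le> (\<rho> + 1) * (sqrt r * sqrt q)"
    using bb by (simp add: algebra_simps)
  also have "\<dots> \<le> (\<rho> + 1) * sqrt r"
    using sq1 r0 assms(1) by (simp add: mult_left_le)
  finally have "a + b \<le> (\<rho> + 1) / \<rho> * sqrt r" using assms(1) by (simp add: field_simps)
  then have "(a + b)\<^sup>2 \<le> ((\<rho> + 1) / \<rho> * sqrt r)\<^sup>2" using a0 by (simp add: power_mono)
  also have "((\<rho> + 1) / \<rho> * sqrt r)\<^sup>2 = ((\<rho> + 1) / \<rho>)\<^sup>2 * real r"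
    by (simp only: power_mult_distrib real_sqrt_pow2 of_nat_0_le_iff)
  finally show ?thesis using nZ fz by simp
qed

end
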